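(* Let $\rho>0$ and $\kappa_0=1/\rho$. Consider the differential equation for a function $\tau(s)$ $$\frac{\rho^4\tau'^2}{9-4\rho^2\tau^2}=\rho^2\kappa_0^2-\frac12+\frac{\rho^2\tau^2}{9}\mp\frac16\sqrt{9-4\rho^2\tau^2}.$$ This equation (for one of the two sign choices) admits the explicit exact solution $$\tau(s)=\pm\frac{6\sqrt2}{\rho}\,\frac{\sqrt{Y(s)}\,|Y(s)-1|}{Y(s)^2+6Y(s)+1},\qquad Y(s)=C e^{\pm\frac{2\sqrt2}{\rho}s},$$ where $C>0$ is a constant of integration depending on the initial conditions.
   Context: This differential equation is the condition satisfied by the torsion $\tau(s)$ (as a function of arc length $s$, primes denoting $d/ds$) of a curve with constant curvature $\kappa_0$ lying on a circular cylinder of radius $\rho$. *)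

theory Defs
  imports Complex_Main
begin

definition Yfun :: "real \<Rightarrow> real \<Rightarrow> real \<Rightarrow> real \<Rightarrow> real" where
  "Yfun \<rho> C \<eta> s = C * exp (\<eta> * (2 * sqrt 2 / \<rho>) * s)"

definition tau_sol :: "real \<Rightarrow> real \<Rightarrow> real \<Rightarrow> real \<Rightarrow> real \<Rightarrow> real" where
  "tau_sol \<rho> C \<epsilon> \<eta> s =
     \<epsilon> * (6 * sqrt 2 / \<rho>) *
       (sqrt (Yfun \<rho> C \<eta> s) * \<bar>Yfun \<rho> C \<eta> s - 1\<bar> /
        ((Yfun \<rho> C \<eta> s)\<^sup>2 + 6 * Yfun \<rho> C \<eta> s + 1))"

end

theory Submission
  imports Defs
begin

lemma key_lem:
  fixes z \<rho> \<epsilon> s1 :: real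
  assumes z: "z > 0" and r: "\<rho> > 0" and e: "\<epsilon>\<^sup>2 = 1" and s1: "s1\<^sup>2 = 1"
  defines "E \<equiv> z^4 + 6*z^2 + 1" and "q \<equiv> z^4 - 10*z^2 + 1"
  defines "T \<equiv> \<epsilon> * (6 * sqrt 2 / \<rho>) * (z * (s1 * (z^2 - 1)) / E)"
  shows "9 - 4 * \<rho>\<^sup>2 * T\<^sup>2 = (3 * q / E)^2"
proof -
  have Ep: "E > 0" unfolding E_def using z by (simp add: add_pos_nonneg)
  have es: "(\<epsilon>*s1)^2 = 1" using e s1 by (simp add: power_mult_distrib)
  have "T = (\<epsilon>*s1) * sqrt 2 * (6*z*(z^2-1)/(\<rho>*E))" unfolding T_def by simp
  hence "T^2 = (\<epsilon>*s1)^2 * (sqrt 2)^2 * (6*z*(z^2-1)/(\<rho>*E))^2" by (simp only: power_mult_distrib)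
  hence "T^2 = 2 * (6*z*(z^2-1)/(\<rho>*E))^2" using es by simp
  moreover have "(6*z*(z^2-1)/(\<rho>*E))^2 = 36*z^2*(z^2-1)^2/(\<rho>^2*E^2)"
    by (simp add: power_mult_distrib power_divide)
  ultimately have T2: "\<rho>\<^sup>2 * T\<^sup>2 = 72 * z^2 * (z^2-1)^2 / E^2"
    using r Ep by (simp add: field_simps)
  have "9 - 4 * \<rho>\<^sup>2 * T\<^sup>2 = 9 - 4 * (72 * z^2 * (z^2-1)^2 / E^2)" using T2 by simp
  also have "\<dots> = (9*E^2 - 288 * z^2 * (z^2-1)^2) / E^2" using Ep by (simp add: field_simps)
  also have "9*E^2 - 288 * z^2 * (z^2-1)^2 = (3*q)^2" unfolding E_def q_def by algebra
  finally show ?thesis by (simp add: power_divide)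
qed

lemma alg_id:
  fixes z \<rho> \<epsilon> \<eta> s1 :: real
  assumes z: "z > 0" and r: "\<rho> > 0" and e: "\<epsilon>\<^sup>2 = 1" and h: "\<eta>\<^sup>2 = 1" and s1: "s1\<^sup>2 = 1"
  defines "E \<equiv> z^4 + 6*z^2 + 1" and "q \<equiv> z^4 - 10*z^2 + 1"
  defines "T \<equiv> \<epsilon> * (6 * sqrt 2 / \<rho>) * (z * (s1 * (z^2 - 1)) / E)"
  defines "T' \<equiv> \<epsilon> * (6 * sqrt 2 / \<rho>) * s1 * (\<eta> * sqrt 2 / \<rho>) * z * (-(z^2+1) * q) / E^2"
  assumes q: "q \<noteq> 0"
  shows "\<rho>^4 * T'\<^sup>2 / (9 - 4 * \<rho>\<^sup>2 * T\<^sup>2)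
                 = \<rho>\<^sup>2 * (1/\<rho>)\<^sup>2 - 1/2 + \<rho>\<^sup>2 * T\<^sup>2 / 9
                   - sgn q * (1/6) * sqrt (9 - 4 * \<rho>\<^sup>2 * T\<^sup>2)"
proof -
  have Ep: "E > 0" unfolding E_def using z by (simp add: add_pos_nonneg)
  have s2: "sqrt 2 ^ 2 = 2" by simp
  have es: "(\<epsilon>*s1)^2 = 1" using e s1 by (simp add: power_mult_distrib)
  have ehs: "(\<epsilon>*s1*\<eta>)^2 = 1" using e s1 h by (simp add: power_mult_distrib)
  have "T = (\<epsilon>*s1) * sqrt 2 * (6*z*(z^2-1)/(\<rho>*E))" unfolding T_def by simp
  hence "T^2 = (\<epsilon>*s1)^2 * (sqrt 2)^2 * (6*z*(z^2-1)/(\<rho>*E))^2" by (simp only: power_mult_distrib)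
  hence "T^2 = 2 * (6*z*(z^2-1)/(\<rho>*E))^2" using es by simp
  moreover have "(6*z*(z^2-1)/(\<rho>*E))^2 = 36*z^2*(z^2-1)^2/(\<rho>^2*E^2)"
    by (simp add: power_mult_distrib power_divide)
  ultimately have T2: "\<rho>\<^sup>2 * T\<^sup>2 = 72 * z^2 * (z^2-1)^2 / E^2"
    using r Ep by (simp add: field_simps)
  have ss: "\<And>x. sqrt 2 * (sqrt 2 * x) = 2 * x" by (simp flip: mult.assoc)
  have "T' = - ((\<epsilon>*s1*\<eta>) * 2 * (6*z*((z^2+1) * q)/(\<rho>^2*E^2)))" unfolding T'_def
    using r Ep by (simp add: field_simps power2_eq_square ss)
  hence "T'^2 = ((\<epsilon>*s1*\<eta>) * 2 * (6*z*((z^2+1) * q)/(\<rho>^2*E^2)))^2" by (simp only: power2_minus)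
  hence "T'^2 = (\<epsilon>*s1*\<eta>)^2 * 2^2 * (6*z*((z^2+1) * q)/(\<rho>^2*E^2))^2" by (simp only: power_mult_distrib)
  hence "T'^2 = 4 * (6*z*((z^2+1) * q)/(\<rho>^2*E^2))^2" using ehs by simp
  moreover have "(6*z*((z^2+1) * q)/(\<rho>^2*E^2))^2 = 36*z^2*(z^2+1)^2*q^2/(\<rho>^4*E^4)"
    by (simp add: power_mult_distrib power_divide flip: power_mult)
  ultimately have T'2: "\<rho>^4 * T'\<^sup>2 = 144 * z^2 * (z^2+1)^2 * q^2 / E^4"
    using r Ep by (simp add: field_simps)
  have key: "9 - 4 * \<rho>\<^sup>2 * T\<^sup>2 = (3 * q / E)^2"
  proof -
    have "9 - 4 * \<rho>\<^sup>2 * T\<^sup>2 = 9 - 4 * (72 * z^2 * (z^2-1)^2 / E^2)" using T2 by simp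
    also have "\<dots> = (9*E^2 - 288 * z^2 * (z^2-1)^2) / E^2" using Ep by (simp add: field_simps)
    also have "9*E^2 - 288 * z^2 * (z^2-1)^2 = (3*q)^2" unfolding E_def q_def by algebra
    finally show ?thesis by (simp add: power_divide)
  qed
  have sq: "sqrt (9 - 4 * \<rho>\<^sup>2 * T\<^sup>2) = 3 * \<bar>q\<bar> / E"
    unfolding key using Ep by simp
  have sg: "sgn q * \<bar>q\<bar> = q" by (simp add: sgn_mult_abs)
  have L: "\<rho>^4 * T'\<^sup>2 / (9 - 4 * \<rho>\<^sup>2 * T\<^sup>2) = 16 * z^2 * (z^2+1)^2 / E^2"
    unfolding T'2 key using Ep q by (simp add: field_simps power2_eq_square) algebra
  have R: "\<rho>\<^sup>2 * (1/\<rho>)\<^sup>2 - 1/2 + \<rho>\<^sup>2 * T\<^sup>2 / 9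
                   - sgn q * (1/6) * sqrt (9 - 4 * \<rho>\<^sup>2 * T\<^sup>2)
        = 1/2 + 8 * z^2 * (z^2-1)^2 / E^2 - q / (2*E)"
  proof -
    have "sgn q * (1/6) * sqrt (9 - 4 * \<rho>\<^sup>2 * T\<^sup>2) = q / (2*E)"
      unfolding sq using sg Ep by (simp add: field_simps)
    then show ?thesis unfolding T2 using r by (simp add: field_simps)
  qed
  have R1: "1/2 + 8 * z^2 * (z^2-1)^2 / E^2 - q / (2*E) = (E^2 + 16 * z^2 * (z^2-1)^2 - q*E) / (2*E^2)"
    using Ep by (simp add: field_simps power2_eq_square)
  have R2: "E^2 + 16 * z^2 * (z^2-1)^2 - q*E = 2 * (16 * z^2 * (z^2+1)^2)"
    unfolding E_def q_def by algebra
  show ?thesis unfolding L R R1 R2 using Ep by simp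
qed

theorem corollary3p4:
  fixes \<rho> C \<epsilon> \<eta> :: real
  assumes "\<rho> > 0" and "C > 0" and "\<epsilon> \<in> {-1, 1}" and "\<eta> \<in> {-1, 1}"
  defines "\<kappa>\<^sub>0 \<equiv> 1 / \<rho>"
    and "\<tau> \<equiv> tau_sol \<rho> C \<epsilon> \<eta>"
  shows "\<forall>s. Yfun \<rho> C \<eta> s \<noteq> 1 \<and> 9 - 4 * \<rho>\<^sup>2 * (\<tau> s)\<^sup>2 \<noteq> 0 \<longrightarrow>
           (\<exists>\<tau>'. (\<tau> has_real_derivative \<tau>') (at s) \<and>
              (\<exists>\<sigma>\<in>{-1, 1::real}.
                 \<rho>^4 * \<tau>'\<^sup>2 / (9 - 4 * \<rho>\<^sup>2 * (\<tau> s)\<^sup>2)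
                 = \<rho>\<^sup>2 * \<kappa>\<^sub>0\<^sup>2 - 1/2 + \<rho>\<^sup>2 * (\<tau> s)\<^sup>2 / 9
                   - \<sigma> * (1/6) * sqrt (9 - 4 * \<rho>\<^sup>2 * (\<tau> s)\<^sup>2)))"
proof (intro allI impI)
  fix s assume A: "Yfun \<rho> C \<eta> s \<noteq> 1 \<and> 9 - 4 * \<rho>\<^sup>2 * (\<tau> s)\<^sup>2 \<noteq> 0"
  define c where "c = sqrt C"
  define b where "b = \<eta> * sqrt 2 / \<rho>"
  define z where "z = (\<lambda>t. c * exp (b * t))"
  define E where "E = (\<lambda>x::real. x^4 + 6*x^2 + 1)"
  define q where "q = (\<lambda>x::real. x^4 - 10*x^2 + 1)"
  have cp: "c > 0" unfolding c_def using assms(2) by simp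
  have zp: "\<And>t. z t > 0" unfolding z_def using cp by simp
  have Ep: "\<And>x. E x > 0"
  proof -
    fix x :: real
    have "x^4 = (x^2)^2" by simp
    hence "0 \<le> x^4" by (metis zero_le_power2)
    moreover have "0 \<le> 6*x^2" by simp
    ultimately show "E x > 0" unfolding E_def by linarith
  qed
  have Enz: "\<And>x. E x \<noteq> 0" using Ep by (metis less_irrefl)
  have Y: "\<And>t. Yfun \<rho> C \<eta> t = (z t)^2"
  proof -
    fix t
    have "exp (\<eta> * (2 * sqrt 2 / \<rho>) * t) = (exp (b*t))^2"
      unfolding b_def by (simp add: power2_eq_square flip: exp_add)
    then show "Yfun \<rho> C \<eta> t = (z t)^2"
      unfolding Yfun_def z_def c_def using assms(2) by (simp add: power_mult_distrib)
  qed
  have tau: "\<And>t. \<tau> t = \<epsilon> * (6 * sqrt 2 / \<rho>) * (z t * \<bar>(z t)^2 - 1\<bar> / E (z t))"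
    unfolding \<tau>_def tau_sol_def Y E_def using zp by (simp add: less_imp_le)
  define s1 where "s1 = sgn ((z s)^2 - 1)"
  have w0: "(z s)^2 - 1 \<noteq> 0" using A Y[of s] by simp
  have s1sq: "s1\<^sup>2 = 1" unfolding s1_def using w0 by (cases "(z s)^2 - 1 > 0") auto
  define g where "g = (\<lambda>t. \<epsilon> * (6 * sqrt 2 / \<rho>) * (z t * (s1 * ((z t)^2 - 1)) / E (z t)))"
  define T' where "T' = \<epsilon> * (6 * sqrt 2 / \<rho>) * s1 * b * z s * (-((z s)^2+1) * q (z s)) / (E (z s))^2"
  have dz: "\<And>t. (z has_real_derivative b * z t) (at t)"
    unfolding z_def by (auto intro!: derivative_eq_intros)
  have numid: "(b * z s * (s1 * ((z s)^2 - 1)) + 2 * (b * z s * z s) * s1 * z s) * (z s ^ 4 + 6 * (z s)^2 + 1) - z s * (s1 * ((z s)^2 - 1)) * (4 * (b * z s * z s ^ 3) + 12 * (b * (z s * z s))) = s1*b*z s*(-((z s)^2+1)*q (z s))" unfolding q_def by algebra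
  have dg: "(g has_real_derivative T') (at s)"
    unfolding g_def E_def
    apply (rule derivative_eq_intros dz refl | simp add: Enz[unfolded E_def])+
    apply (simp only: numid)
    using assms(1) Enz[of "z s", unfolded E_def] apply (simp add: T'_def E_def field_simps power2_eq_square)
    done
  have S: "open {t. 0 < s1 * ((z t)^2 - 1)}"
    unfolding z_def by (intro open_Collect_less continuous_intros)
  have sin: "s \<in> {t. 0 < s1 * ((z t)^2 - 1)}"
    unfolding s1_def using w0 by (cases "(z s)^2 - 1 > 0") (auto simp: sgn_mult_abs)
  have eqg: "\<And>t. t \<in> {t. 0 < s1 * ((z t)^2 - 1)} \<Longrightarrow> g t = \<tau> t"
  proof -
    fix t assume "t \<in> {t. 0 < s1 * ((z t)^2 - 1)}"
    hence "\<bar>(z t)^2 - 1\<bar> = s1 * ((z t)^2 - 1)" using s1sq unfolding s1_def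
      by (cases "(z s)^2 - 1 > 0") (auto simp: sgn_if split: if_splits)
    then show "g t = \<tau> t" unfolding g_def tau by simp
  qed
  have dt: "(\<tau> has_real_derivative T') (at s)"
    by (rule has_field_derivative_transform_within_open[OF dg S sin eqg])
  have e2: "\<epsilon>\<^sup>2 = 1" and h2: "\<eta>\<^sup>2 = 1" using assms(3,4) by auto
  have ts0: "\<tau> s = \<epsilon> * (6 * sqrt 2 / \<rho>) * (z s * (s1 * ((z s)^2 - 1)) / ((z s)^4 + 6*(z s)^2 + 1))"
    using eqg[OF sin] unfolding g_def E_def by simp
  have qn: "q (z s) \<noteq> 0"
  proof
    assume "q (z s) = 0"
    hence "9 - 4 * \<rho>\<^sup>2 * (\<tau> s)\<^sup>2 = 0"
      unfolding ts0 using key_lem[OF zp[of s] assms(1) e2 s1sq] unfolding q_def by simp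
    thus False using A by simp
  qed
  have ts: "\<tau> s = g s" using eqg[OF sin] by simp
  show "\<exists>\<tau>'. (\<tau> has_real_derivative \<tau>') (at s) \<and>
              (\<exists>\<sigma>\<in>{-1, 1::real}.
                 \<rho>^4 * \<tau>'\<^sup>2 / (9 - 4 * \<rho>\<^sup>2 * (\<tau> s)\<^sup>2)
                 = \<rho>\<^sup>2 * \<kappa>\<^sub>0\<^sup>2 - 1/2 + \<rho>\<^sup>2 * (\<tau> s)\<^sup>2 / 9
                   - \<sigma> * (1/6) * sqrt (9 - 4 * \<rho>\<^sup>2 * (\<tau> s)\<^sup>2))"
  proof (intro exI conjI bexI)
    show "(\<tau> has_real_derivative T') (at s)" by (rule dt)
    show "sgn (q (z s)) \<in> {-1, 1::real}" using qn by (cases "q (z s) > 0") auto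
    show "\<rho>^4 * T'\<^sup>2 / (9 - 4 * \<rho>\<^sup>2 * (\<tau> s)\<^sup>2)
                 = \<rho>\<^sup>2 * \<kappa>\<^sub>0\<^sup>2 - 1/2 + \<rho>\<^sup>2 * (\<tau> s)\<^sup>2 / 9
                   - sgn (q (z s)) * (1/6) * sqrt (9 - 4 * \<rho>\<^sup>2 * (\<tau> s)\<^sup>2)"
      unfolding ts g_def T'_def \<kappa>\<^sub>0_def b_def E_def
      using alg_id[OF zp[of s] assms(1) e2 h2 s1sq] qn unfolding q_def E_def
      by (simp add: mult.assoc)
  qed
qed

end
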